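(* If $S(A)$ is an independent Stanley sequence, then $\omega(A)<\lambda(A)$ (equivalently, every element of the omitted set $O(A)$ is less than $\lambda(A)$).
   Context: A set of non-negative integers is 3-free if no three of its elements form an arithmetic progression. For a finite 3-free set $A=\{a_0<\cdots<a_k\}$ of non-negative integers, the Stanley sequence $S(A)=(a_n)_{n\ge0}$ is the increasing sequence with initial terms $a_0,\ldots,a_k$ in which each subsequent $a_{n+1}$ is the smallest integer greater than $a_n$ such that $\{a_0,\ldots,a_{n+1}\}$ is 3-free. Throughout, Stanley sequences are in root position ($a_0=0$). An integer $x$ is covered by a set $S$ if there exist $s<t$ in $S$ with $2t-s=x$. The omitted set $O(A)$ is the set of non-negative integers neither in $S(A)$ nor covered by $S(A)$; $\omega(A)$ is its largest element. A Stanley sequence $(a_n)$ is independent with character $\lambda(A)=\lambda$ if for all sufficiently large $k$: $a_{2^k+i}=a_{2^k}+a_i$ for $0\le i<2^k$, and $a_{2^k}=2a_{2^k-1}-\lambda+1$. *)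

theory Defs
  imports Main
begin

definition three_free :: "nat set \<Rightarrow> bool" where
  "three_free S \<longleftrightarrow> (\<forall>x\<in>S. \<forall>y\<in>S. \<forall>z\<in>S. x < y \<and> y < z \<longrightarrow> x + z \<noteq> 2 * y)"

text \<open>Initial segments of the Stanley sequence: stanley_prefix A n is the list
  of the first card A + n terms (the elements of A in increasing order,
  followed by n greedily chosen terms).\<close>
primrec stanley_prefix :: "nat set \<Rightarrow> nat \<Rightarrow> nat list" where
  "stanley_prefix A 0 = sorted_list_of_set A"
| "stanley_prefix A (Suc n) =
     stanley_prefix A n @
       [LEAST x. last (stanley_prefix A n) < x \<and> three_free (insert x (set (stanley_prefix A n)))]"

definition stanley :: "nat set \<Rightarrow> nat \<Rightarrow> nat" where
  "stanley A n = stanley_prefix A n ! n"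

definition covered :: "nat set \<Rightarrow> nat \<Rightarrow> bool" where
  "covered S x \<longleftrightarrow> (\<exists>s\<in>S. \<exists>t\<in>S. s < t \<and> 2 * t - s = x)"

definition omitted :: "nat set \<Rightarrow> nat set" where
  "omitted A = {x. x \<notin> range (stanley A) \<and> \<not> covered (range (stanley A)) x}"

definition independent_with_character :: "nat set \<Rightarrow> int \<Rightarrow> bool" where
  "independent_with_character A lam \<longleftrightarrow>
     (\<exists>K. \<forall>k\<ge>K.
        (\<forall>i<2^k. stanley A (2^k + i) = stanley A (2^k) + stanley A i) \<and>
        int (stanley A (2^k)) = 2 * int (stanley A (2^k - 1)) - lam + 1)"

end

theory Submission
  imports Defs
begin

lemma len_P: "finite A \<Longrightarrow> length (stanley_prefix A n) = card A + n"
  by (induction n) auto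

lemma sorted_le_last:
  assumes "sorted_wrt (<) (xs::nat list)" "z \<in> set xs"
  shows "z \<le> last xs"
  using assms
proof (induction xs)
  case Nil thus ?case by simp
next
  case (Cons a xs)
  show ?case
  proof (cases "xs = []")
    case True thus ?thesis using Cons by simp
  next
    case False
    have "\<forall>x\<in>set xs. a < x" using Cons.prems by simp
    hence al: "a < last xs" using last_in_set[OF False] by blast
    show ?thesis
    proof (cases "z = a")
      case True thus ?thesis using al by simp
    next
      case F2: False thus ?thesis using Cons by auto
    qed
  qed
qed

lemma tf_insert:
  assumes "three_free S" "\<forall>z\<in>S. z < w"
  shows "three_free (insert w S) \<longleftrightarrow> \<not>(\<exists>s\<in>S. \<exists>t\<in>S. s < t \<and> s + w = 2 * t)"
proof
  assume tf: "three_free (insert w S)"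
  show "\<not>(\<exists>s\<in>S. \<exists>t\<in>S. s < t \<and> s + w = 2 * t)"
  proof
    assume "\<exists>s\<in>S. \<exists>t\<in>S. s < t \<and> s + w = 2 * t"
    then obtain s t where st: "s \<in> S" "t \<in> S" "s < t" "s + w = 2 * t" by blast
    have "t < w" using st assms(2) by blast
    thus False using tf st unfolding three_free_def by blast
  qed
next
  assume no: "\<not>(\<exists>s\<in>S. \<exists>t\<in>S. s < t \<and> s + w = 2 * t)"
  show "three_free (insert w S)"
    unfolding three_free_def
  proof (intro ballI impI)
    fix x y z assume xyz: "x \<in> insert w S" "y \<in> insert w S" "z \<in> insert w S" "x < y \<and> y < z"
    show "x + z \<noteq> 2 * y"
    proof (cases "z = w")
      case True
      hence "x \<in> S" "y \<in> S" using xyz by auto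
      thus ?thesis using no True xyz by blast
    next
      case False
      hence zS: "z \<in> S" using xyz by auto
      hence "y \<in> S" "x \<in> S" using xyz assms(2) by (auto dest: bspec[of _ _ z])
      thus ?thesis using zS xyz assms(1) unfolding three_free_def by blast
    qed
  qed
qed

lemma least_ex:
  assumes "sorted_wrt (<) xs" "xs \<noteq> []" "three_free (set xs)"
  shows "\<exists>x. last xs < x \<and> three_free (insert x (set xs))"
proof -
  have le: "\<forall>z\<in>set xs. z \<le> last xs" using sorted_le_last assms(1) by blast
  have "three_free (insert (2 * last xs + 1) (set xs))"
    apply (subst tf_insert[OF assms(3)])
    using le by fastforce+
  thus ?thesis by (intro exI[of _ "2 * last xs + 1"]) auto
qed

lemma inv_P:
  assumes "finite A" "0 \<in> A" "three_free A"
  shows "sorted_wrt (<) (stanley_prefix A n) \<and> three_free (set (stanley_prefix A n))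
         \<and> stanley_prefix A n \<noteq> []"
proof (induction n)
  case 0
  then show ?case using assms by (auto simp: strict_sorted_list_of_set)
next
  case (Suc n)
  let ?xs = "stanley_prefix A n"
  let ?L = "LEAST x. last ?xs < x \<and> three_free (insert x (set ?xs))"
  have "last ?xs < ?L \<and> three_free (insert ?L (set ?xs))"
    using least_ex[of ?xs] Suc by (metis (mono_tags, lifting) LeastI_ex)
  moreover have "\<forall>z\<in>set ?xs. z \<le> last ?xs" using sorted_le_last Suc by blast
  ultimately show ?case using Suc by (auto simp: sorted_wrt_append)
qed

lemma P_ext: "finite A \<Longrightarrow> i < length (stanley_prefix A n) \<Longrightarrow>
   stanley_prefix A (n + d) ! i = stanley_prefix A n ! i"
  by (induction d) (auto simp: nth_append len_P)

lemma nthP: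
  assumes "finite A" "0 < card A" "i < card A + m"
  shows "stanley_prefix A m ! i = stanley A i"
proof -
  have "stanley_prefix A (m + i) ! i = stanley_prefix A m ! i"
    using P_ext[of A i m i] assms len_P by simp
  moreover have "stanley_prefix A (i + m) ! i = stanley_prefix A i ! i"
    using P_ext[of A i i m] assms len_P by simp
  ultimately show ?thesis unfolding stanley_def by (simp add: add.commute)
qed

lemma mono_a:
  assumes "finite A" "0 \<in> A" "three_free A" "i < j"
  shows "stanley A i < stanley A j"
proof -
  have c0: "0 < card A" using assms(1,2) card_gt_0_iff by blast
  have s: "sorted_wrt (<) (stanley_prefix A j)" using inv_P assms by blast
  have "stanley_prefix A j ! i < stanley_prefix A j ! j"
    using s assms c0 len_P[of A j] unfolding sorted_wrt_iff_nth_less by auto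
  thus ?thesis using nthP[of A i j] nthP[of A j j] assms c0 by simp
qed

lemma mono_le:
  assumes "finite A" "0 \<in> A" "three_free A" "i \<le> j"
  shows "stanley A i \<le> stanley A j"
  using mono_a[OF assms(1-3)] assms(4) by (cases "i = j") (auto intro: less_imp_le)

lemma a_ge:
  assumes "finite A" "0 \<in> A" "three_free A"
  shows "i \<le> stanley A i"
proof -
  have "strict_mono (stanley A)" using mono_a[OF assms] by (simp add: strict_monoI)
  thus ?thesis using strict_mono_imp_increasing by blast
qed

lemma set_P:
  assumes "finite A" "0 \<in> A"
  shows "set (stanley_prefix A n) = stanley A ` {..< card A + n}"
proof -
  have c0: "0 < card A" using assms card_gt_0_iff by blast
  have "set (stanley_prefix A n) = (\<lambda>i. stanley_prefix A n ! i) ` {..<card A + n}"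
    using len_P[OF assms(1)] by (metis atLeast_upt map_nth set_map)
  also have "\<dots> = stanley A ` {..< card A + n}"
    using nthP[OF assms(1) c0] by (intro image_cong) auto
  finally show ?thesis .
qed

lemma greedy:
  assumes "finite A" "0 \<in> A" "three_free A"
    and "y \<notin> range (stanley A)" "stanley A (card A - 1) < y"
  shows "covered (range (stanley A)) y"
proof -
  let ?a = "stanley A"
  let ?c = "card A"
  have c1: "?c \<ge> 1" using assms(1,2) by (metis One_nat_def Suc_leI card_gt_0_iff empty_iff)
  have ex: "\<exists>m. y < ?a m" using a_ge[OF assms(1-3), of "Suc y"] by (intro exI[of _ "Suc y"]) simp
  define m0 where "m0 = (LEAST m. y < ?a m)"
  have m0: "y < ?a m0" unfolding m0_def using ex by (rule LeastI_ex)
  have m0min: "\<And>m. m < m0 \<Longrightarrow> ?a m \<le> y" unfolding m0_def using not_less_Least by (metis not_less)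
  have "m0 \<ge> ?c"
  proof (rule ccontr)
    assume "\<not> ?c \<le> m0"
    hence "m0 \<le> ?c - 1" by simp
    hence "?a m0 \<le> ?a (?c - 1)" using mono_le[OF assms(1-3)] by blast
    thus False using m0 assms(5) by simp
  qed
  then obtain n where n: "m0 = ?c + n" using le_Suc_ex by blast
  have "?a (?c + n - 1) \<le> y" using m0min n c1 by simp
  moreover have "?a (?c + n - 1) \<noteq> y" using assms(4) by auto
  ultimately have lt: "?a (?c + n - 1) < y" by simp
  let ?xs = "stanley_prefix A n"
  have ne: "?xs \<noteq> []" using inv_P[OF assms(1-3)] by blast
  have lastxs: "last ?xs = ?a (?c + n - 1)"
    using ne len_P[OF assms(1), of n] nthP[OF assms(1) _, of "?c + n - 1" n] c1
    by (simp add: last_conv_nth)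
  have "stanley_prefix A (Suc n) ! (?c + n) = ?a (?c + n)"
    by (rule nthP[OF assms(1)]) (use c1 in auto)
  hence L: "?a (?c + n) = (LEAST x. last ?xs < x \<and> three_free (insert x (set ?xs)))"
    using len_P[OF assms(1), of n] by (simp add: nth_append)
  have "\<not> (last ?xs < y \<and> three_free (insert y (set ?xs)))"
    using not_less_Least[of y] L m0 n by metis
  hence ntf: "\<not> three_free (insert y (set ?xs))" using lastxs lt by simp
  have allless: "\<forall>z\<in>set ?xs. z < y"
    using sorted_le_last[of ?xs] inv_P[OF assms(1-3), of n] lastxs lt by fastforce
  have tf: "three_free (set ?xs)" using inv_P[OF assms(1-3)] by blast
  obtain s t where st: "s \<in> set ?xs" "t \<in> set ?xs" "s < t" "s + y = 2 * t"
    using tf_insert[OF tf allless] ntf by blast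
  have "s \<in> range ?a" "t \<in> range ?a" using st set_P[OF assms(1,2)] by auto
  thus ?thesis unfolding covered_def using st by (intro bexI[of _ s] bexI[of _ t]) auto
qed

theorem mainTheorem11:
  fixes A :: "nat set" and lam :: int
  assumes "finite A" and "0 \<in> A" and "three_free A"
    and "independent_with_character A lam"
  shows "\<forall>x\<in>omitted A. int x < lam"
proof
  fix x assume xo: "x \<in> omitted A"
  let ?a = "stanley A"
  let ?c = "card A"
  have xnr: "x \<notin> range ?a" and xnc: "\<not> covered (range ?a) x" using xo unfolding omitted_def by auto
  show "int x < lam"
  proof (rule ccontr)
    assume "\<not> int x < lam"
    hence lamx: "lam \<le> int x" by simp
    obtain K where K: "\<forall>k\<ge>K. (\<forall>i<2^k. ?a (2^k + i) = ?a (2^k) + ?a i) \<and>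
        int (?a (2^k)) = 2 * int (?a (2^k - 1)) - lam + 1"
      using assms(4) unfolding independent_with_character_def by blast
    define k where "k = max K (2*x + ?c + 2)"
    define N :: nat where "N = 2^k"
    have "k < 2^k" by (rule less_exp)
    hence Nbig: "N \<ge> 2*x + ?c + 2" unfolding N_def k_def by linarith
    have blk: "\<And>i. i < N \<Longrightarrow> ?a (N + i) = ?a N + ?a i" using K unfolding N_def k_def by auto
    have chr: "int (?a N) = 2 * int (?a (N - 1)) - lam + 1" using K unfolding N_def k_def by auto
    have mono: "\<And>i j. i < j \<Longrightarrow> ?a i < ?a j" using mono_a[OF assms(1-3)] by blast
    have monol: "\<And>i j. i \<le> j \<Longrightarrow> ?a i \<le> ?a j" using mono_le[OF assms(1-3)] by blast
    have aN1: "?a (N - 1) \<ge> 2*x + ?c + 1" using a_ge[OF assms(1-3), of "N - 1"] Nbig by simp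
    have NN: "N + (N - 1) = 2*N - 1" using Nbig by simp
    have top: "?a (2*N - 1) = ?a N + ?a (N - 1)" using blk[of "N - 1"] Nbig NN by simp
    define y where "y = ?a N + x"
    have ynr: "y \<notin> range ?a"
    proof
      assume "y \<in> range ?a"
      then obtain m where m: "?a m = y" by auto
      show False
      proof (cases "m < N")
        case True thus ?thesis using mono[of m N] m unfolding y_def by simp
      next
        case False
        show ?thesis
        proof (cases "m > 2*N - 1")
          case True thus ?thesis using mono[of "2*N - 1" m] m top aN1 unfolding y_def by simp
        next
          case False2: False
          have "m - N < N" using False False2 Nbig by simp
          hence "?a m = ?a N + ?a (m - N)" using blk[of "m - N"] False by simp
          hence "x = ?a (m - N)" using m unfolding y_def by simp
          thus False using xnr by auto
        qed
      qed
    qed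
    have "?c - 1 < N" using Nbig by simp
    hence "?a (?c - 1) < y" using mono[of "?c - 1" N] unfolding y_def by simp
    hence "covered (range ?a) y" using greedy[OF assms(1-3) ynr] by blast
    then obtain i j where ij: "?a i < ?a j" "2 * ?a j - ?a i = y" unfolding covered_def by auto
    have "i < j" using ij(1) monol by (metis not_less)
    show False
    proof (cases "j < N")
      case True
      hence "?a j \<le> ?a (N - 1)" using monol by simp
      hence "y \<le> 2 * ?a (N - 1)" using ij by simp
      hence "int (?a N) + int x \<le> 2 * int (?a (N - 1))" unfolding y_def by simp
      thus False using chr lamx by simp
    next
      case False
      have tly: "?a j < y" using ij by simp
      have "j < 2*N - 1"
      proof (rule ccontr)
        assume "\<not> j < 2*N - 1"
        hence "?a (2*N - 1) \<le> ?a j" using monol by simp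
        thus False using tly top aN1 unfolding y_def by simp
      qed
      hence j': "j - N < N" using False by simp
      have tj: "?a j = ?a N + ?a (j - N)" using blk[OF j'] False by simp
      show False
      proof (cases "i < N")
        case False3: False
        have i': "i - N < N" using False3 \<open>i < j\<close> j' by simp
        have si: "?a i = ?a N + ?a (i - N)" using blk[OF i'] False3 by simp
        have lt: "?a (i - N) < ?a (j - N)" using ij(1) si tj by simp
        have "2 * ?a (j - N) - ?a (i - N) = x" using ij(2) si tj unfolding y_def by simp
        have r: "?a (i - N) \<in> range ?a" "?a (j - N) \<in> range ?a" by auto
        hence "covered (range ?a) x" unfolding covered_def using lt \<open>2 * ?a (j - N) - ?a (i - N) = x\<close> by blast
        thus False using xnc by simp
      next
        case True
        hence "?a i \<le> ?a (N - 1)" using monol by simp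
        moreover have "x + ?a i = ?a N + 2 * ?a (j - N)" using ij tj unfolding y_def by simp
        ultimately have h1: "int x + int (?a (N - 1)) \<ge> int (?a N)" by linarith
        have h2: "int (?a (N - 1)) \<ge> 2 * int x + 1" using aN1 by linarith
        show False using h1 h2 chr lamx by linarith
      qed
    qed
  qed
qed

end
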